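(* Let $n\ge1$, let $\Gamma=\mathrm{Int}(2^{[n]})$ be the interval subdivision of the $(n-1)$-dimensional simplex on $[n]=\{1,\dots,n\}$, and let $\partial(\Gamma)$ be its boundary. Then $h(\partial(\Gamma),x)=B^{++}_n(x)$.
   Context: $\mathrm{Int}(2^{[n]})$ is the order complex of the poset $\{[A,B]:\emptyset\ne A\subseteq B\subseteq[n]\}$ with $[A,B]\le[A',B']$ iff $A'\subseteq A\subseteq B\subseteq B'$. Its boundary $\partial(\Gamma)$ is the subcomplex of chains of intervals $[A,B]$ with $B\ne[n]$, i.e. the interval subdivision of the boundary complex $\partial(2^{[n]})$ (all proper subsets of $[n]$); it has dimension $n-2$. For a $(d-1)$-dimensional complex with $f$-polynomial $f(x)=\sum_if_ix^i$ ($f_i$ = number of faces with $i$ vertices), $h(x)=(1-x)^df(x/(1-x))$. $B_n$ is the group of signed permutations $\sigma=\sigma_1\cdots\sigma_n$ of $\{\pm1,\dots,\pm n\}$; with $\sigma_0=0$, $\mathrm{des}_B(\sigma)=|\{i\in\{0,\dots,n-1\}:\sigma_i>\sigma_{i+1}\}|$; $B^{++}_n(x)=\sum x^{\mathrm{des}_B(\sigma)}$ over $\sigma\in B_n$ with $\sigma_1>0$ and $\sigma_n>0$. *)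

theory Defs
  imports "HOL-Computational_Algebra.Polynomial"
begin

definition interval_poset :: "nat \<Rightarrow> (nat set \<times> nat set) set" where
  "interval_poset n = {(A, B). A \<noteq> {} \<and> A \<subseteq> B \<and> B \<subseteq> {1..n}}"

definition interval_le :: "nat set \<times> nat set \<Rightarrow> nat set \<times> nat set \<Rightarrow> bool" where
  "interval_le I J = (fst J \<subseteq> fst I \<and> snd I \<subseteq> snd J)"

(* order complex of a poset: faces are the finite chains (including the empty face) *)
definition order_complex :: "'a set \<Rightarrow> ('a \<Rightarrow> 'a \<Rightarrow> bool) \<Rightarrow> 'a set set" where
  "order_complex P le = {C. C \<subseteq> P \<and> finite C \<and> (\<forall>x\<in>C. \<forall>y\<in>C. le x y \<or> le y x)}"

definition Int_complex :: "nat \<Rightarrow> (nat set \<times> nat set) set set" where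
  "Int_complex n = order_complex (interval_poset n) interval_le"

definition Int_boundary :: "nat \<Rightarrow> (nat set \<times> nat set) set set" where
  "Int_boundary n = {C \<in> Int_complex n. \<forall>I\<in>C. snd I \<noteq> {1..n}}"

(* f_i = number of faces with i vertices *)
definition fnum :: "'a set set \<Rightarrow> nat \<Rightarrow> nat" where
  "fnum K i = card {F \<in> K. card F = i}"

(* d = dimension + 1 = maximal number of vertices of a face *)
definition cdim1 :: "'a set set \<Rightarrow> nat" where
  "cdim1 K = Max (card ` K)"

(* h(x) = (1-x)^d f(x/(1-x)) = sum_i f_i x^i (1-x)^(d-i) *)
definition h_poly :: "'a set set \<Rightarrow> int poly" where
  "h_poly K = (\<Sum>i\<le>cdim1 K. of_nat (fnum K i) * [:0, 1:] ^ i * [:1, -1:] ^ (cdim1 K - i))"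

(* signed permutations of {\<plusminus>1..\<plusminus>n}, as functions on {1..n}, zero elsewhere (so \<sigma> 0 = 0) *)
definition signed_perms :: "nat \<Rightarrow> (nat \<Rightarrow> int) set" where
  "signed_perms n = {\<sigma>. (\<forall>i. i \<notin> {1..n} \<longrightarrow> \<sigma> i = 0) \<and>
                          bij_betw (\<lambda>i. nat \<bar>\<sigma> i\<bar>) {1..n} {1..n}}"

definition desB :: "nat \<Rightarrow> (nat \<Rightarrow> int) \<Rightarrow> nat" where
  "desB n \<sigma> = card {i \<in> {0..<n}. \<sigma> i > \<sigma> (Suc i)}"

definition Bpp :: "nat \<Rightarrow> int poly" where
  "Bpp n = (\<Sum>\<sigma>\<in>{\<sigma> \<in> signed_perms n. \<sigma> 1 > 0 \<and> \<sigma> n > 0}. monom 1 (desB n \<sigma>))"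

end

theory Submission
  imports Defs "HOL-Computational_Algebra.Polynomial_FPS" "HOL-Library.FuncSet"
begin


abbreviation SP where "SP \<equiv> signed_perms"

lemma SP_zero: "\<sigma> \<in> SP n \<Longrightarrow> i \<notin> {1..n} \<Longrightarrow> \<sigma> i = 0"
  unfolding signed_perms_def by auto

lemma SP_0: "\<sigma> \<in> SP n \<Longrightarrow> \<sigma> 0 = 0"
  by (simp add: SP_zero)

lemma SP_big: "\<sigma> \<in> SP n \<Longrightarrow> n < i \<Longrightarrow> \<sigma> i = 0"
  by (simp add: SP_zero)

lemma SP_bij: "\<sigma> \<in> SP n \<Longrightarrow> bij_betw (\<lambda>i. nat \<bar>\<sigma> i\<bar>) {1..n} {1..n}"
  unfolding signed_perms_def by auto

lemma SP_range: assumes "\<sigma> \<in> SP n" "i \<in> {1..n}" shows "nat \<bar>\<sigma> i\<bar> \<in> {1..n}"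
  using SP_bij[OF assms(1)] assms(2) by (auto dest: bij_betwE)

lemma SP_abs_le: assumes "\<sigma> \<in> SP n" shows "\<bar>\<sigma> i\<bar> \<le> int n"
proof (cases "i \<in> {1..n}")
  case True then show ?thesis using SP_range[OF assms True] by auto
next
  case False then show ?thesis using SP_zero[OF assms False] by auto
qed

lemma SP_nonzero: assumes "\<sigma> \<in> SP n" "i \<in> {1..n}" shows "\<sigma> i \<noteq> 0"
  using SP_range[OF assms] by auto

lemma SP_finite: "finite (SP n)"
proof -
  have "inj_on (\<lambda>\<sigma>. restrict \<sigma> {1..n}) (SP n)"
  proof (rule inj_onI)
    fix \<sigma> \<tau> assume a: "\<sigma> \<in> SP n" "\<tau> \<in> SP n" "restrict \<sigma> {1..n} = restrict \<tau> {1..n}"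
    show "\<sigma> = \<tau>"
    proof
      fix i show "\<sigma> i = \<tau> i"
        using a SP_zero[OF a(1), of i] SP_zero[OF a(2), of i] by (cases "i \<in> {1..n}") (auto simp: fun_eq_iff restrict_def split: if_splits)
    qed
  qed
  moreover have "(\<lambda>\<sigma>. restrict \<sigma> {1..n}) ` SP n \<subseteq> PiE {1..n} (\<lambda>_. {-int n..int n})"
    using SP_abs_le by (force simp: abs_le_iff)
  moreover have "finite (PiE {1..n} (\<lambda>_. {-int n..int n}))" by (rule finite_PiE) auto
  ultimately show ?thesis using finite_imageD finite_subset by metis
qed

definition ins :: "(nat \<Rightarrow> int) \<Rightarrow> nat \<Rightarrow> int \<Rightarrow> nat \<Rightarrow> int" where
  "ins \<tau> p v = (\<lambda>i. if i < p then \<tau> i else if i = p then v else \<tau> (i - 1))"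

definition del :: "(nat \<Rightarrow> int) \<Rightarrow> nat \<Rightarrow> nat \<Rightarrow> int" where
  "del \<sigma> p = (\<lambda>i. if i < p then \<sigma> i else \<sigma> (Suc i))"

lemma del_ins: "del (ins \<tau> p v) p = \<tau>"
  by (auto simp: del_def ins_def fun_eq_iff)

lemma ins_SP:
  assumes t: "\<tau> \<in> SP m" and p: "p \<in> {1..Suc m}" and v: "\<bar>v\<bar> = int (Suc m)"
  shows "ins \<tau> p v \<in> SP (Suc m)"
proof -
  let ?s = "ins \<tau> p v"
  have z: "?s i = 0" if "i \<notin> {1..Suc m}" for i
  proof (cases "i = 0")
    case True then show ?thesis using p SP_0[OF t] by (auto simp: ins_def)
  next
    case False
    then have "i > Suc m" using that by auto
    then show ?thesis using p SP_big[OF t, of "i - 1"] by (auto simp: ins_def)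
  qed
  let ?f = "\<lambda>i. nat \<bar>?s i\<bar>"
  have im: "?f ` {1..Suc m} = {1..Suc m}"
  proof
    show "?f ` {1..Suc m} \<subseteq> {1..Suc m}"
    proof
      fix y assume "y \<in> ?f ` {1..Suc m}"
      then obtain i where i: "i \<in> {1..Suc m}" "y = ?f i" by auto
      show "y \<in> {1..Suc m}"
      proof (cases "i < p")
        case True
        then have "i \<in> {1..m}" using i p by auto
        then show ?thesis using SP_range[OF t, of i] i True by (auto simp: ins_def)
      next
        case False
        show ?thesis
        proof (cases "i = p")
          case True then show ?thesis using i v by (auto simp: ins_def)
        next
          case False
          then have "i - 1 \<in> {1..m}" using i p \<open>\<not> i < p\<close> by auto
          then show ?thesis using SP_range[OF t, of "i - 1"] i False \<open>\<not> i < p\<close> by (auto simp: ins_def)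
        qed
      qed
    qed
  next
    show "{1..Suc m} \<subseteq> ?f ` {1..Suc m}"
    proof
      fix y assume y: "y \<in> {1..Suc m}"
      show "y \<in> ?f ` {1..Suc m}"
      proof (cases "y = Suc m")
        case True
        then have "?f p = y" using v by (auto simp: ins_def)
        then show ?thesis using p by force
      next
        case False
        then have "y \<in> {1..m}" using y by auto
        then have "y \<in> (\<lambda>i. nat \<bar>\<tau> i\<bar>) ` {1..m}"
          using SP_bij[OF t] unfolding bij_betw_def by blast
        then obtain j where j: "j \<in> {1..m}" "y = nat \<bar>\<tau> j\<bar>" by blast
        show ?thesis
        proof (cases "j < p")
          case True
          then have "?f j = y" using j by (auto simp: ins_def)
          then show ?thesis using j by force
        next
          case False
          then have "?f (Suc j) = y" using j by (auto simp: ins_def)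
          then show ?thesis using j by force
        qed
      qed
    qed
  qed
  then have "inj_on ?f {1..Suc m}" by (intro eq_card_imp_inj_on) auto
  then have "bij_betw ?f {1..Suc m} {1..Suc m}" using im by (simp add: bij_betw_def)
  then show ?thesis using z unfolding signed_perms_def by auto
qed

lemma ins_del: "0 < p \<Longrightarrow> ins (del \<sigma> p) p (\<sigma> p) = \<sigma>"
  by (auto simp: del_def ins_def fun_eq_iff)

lemma del_SP:
  assumes s: "\<sigma> \<in> SP (Suc m)" and p: "p \<in> {1..Suc m}" and sp: "nat \<bar>\<sigma> p\<bar> = Suc m"
  shows "del \<sigma> p \<in> SP m"
proof -
  let ?t = "del \<sigma> p"
  let ?g = "\<lambda>i. nat \<bar>\<sigma> i\<bar>"
  have gbij: "bij_betw ?g {1..Suc m} {1..Suc m}" by (rule SP_bij[OF s])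
  then have ginj: "inj_on ?g {1..Suc m}" by (simp add: bij_betw_def)
  have z: "?t i = 0" if "i \<notin> {1..m}" for i
  proof (cases "i = 0")
    case True then show ?thesis using p SP_0[OF s] by (auto simp: del_def)
  next
    case False
    then have "i > m" using that by auto
    then show ?thesis using p SP_big[OF s, of "Suc i"] by (auto simp: del_def)
  qed
  let ?f = "\<lambda>i. nat \<bar>?t i\<bar>"
  have im: "?f ` {1..m} = {1..m}"
  proof
    show "?f ` {1..m} \<subseteq> {1..m}"
    proof
      fix y assume "y \<in> ?f ` {1..m}"
      then obtain i where i: "i \<in> {1..m}" "y = ?f i" by auto
      define j where "j = (if i < p then i else Suc i)"
      have j: "j \<in> {1..Suc m}" "j \<noteq> p" using i p by (auto simp: j_def)
      have yj: "y = ?g j" using i by (auto simp: j_def del_def)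
      have "?g j \<in> {1..Suc m}" using SP_range[OF s j(1)] .
      moreover have "?g j \<noteq> Suc m"
      proof
        assume "?g j = Suc m"
        then have "?g j = ?g p" using sp by simp
        then show False using inj_onD[OF ginj _ j(1)] p j(2) by auto
      qed
      ultimately show "y \<in> {1..m}" using yj by auto
    qed
  next
    show "{1..m} \<subseteq> ?f ` {1..m}"
    proof
      fix y assume y: "y \<in> {1..m}"
      then have "y \<in> ?g ` {1..Suc m}" using gbij unfolding bij_betw_def by auto
      then obtain j where j: "j \<in> {1..Suc m}" "y = ?g j" by blast
      have "j \<noteq> p" using j sp y by auto
      show "y \<in> ?f ` {1..m}"
      proof (cases "j < p")
        case True
        then have "?f j = y" using j by (auto simp: del_def)
        moreover have "j \<in> {1..m}" using True j p by auto
        ultimately show ?thesis by force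
      next
        case False
        then have jp: "j > p" using \<open>j \<noteq> p\<close> by auto
        then have "?f (j - 1) = y" using j by (auto simp: del_def)
        moreover have "j - 1 \<in> {1..m}" using jp j p by auto
        ultimately show ?thesis by force
      qed
    qed
  qed
  then have "inj_on ?f {1..m}" by (intro eq_card_imp_inj_on) auto
  then have "bij_betw ?f {1..m} {1..m}" using im by (simp add: bij_betw_def)
  then show ?thesis using z unfolding signed_perms_def by auto
qed

lemma SP_Suc_decomp:
  assumes s: "\<sigma> \<in> SP (Suc m)"
  shows "\<exists>\<tau> p v. \<tau> \<in> SP m \<and> p \<in> {1..Suc m} \<and> \<bar>v\<bar> = int (Suc m) \<and> \<sigma> = ins \<tau> p v"
proof -
  have "Suc m \<in> (\<lambda>i. nat \<bar>\<sigma> i\<bar>) ` {1..Suc m}" using SP_bij[OF s] unfolding bij_betw_def by auto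
  then obtain p where p: "p \<in> {1..Suc m}" "nat \<bar>\<sigma> p\<bar> = Suc m" by auto
  have "\<bar>\<sigma> p\<bar> = int (Suc m)" using p(2) by linarith
  then show ?thesis using del_SP[OF s p] ins_del[of p \<sigma>] p(1) by (intro exI[of _ "del \<sigma> p"] exI[of _ p] exI[of _ "\<sigma> p"]) auto
qed

lemma ins_abs: assumes t: "\<tau> \<in> SP m" and v: "\<bar>v\<bar> = int (Suc m)"
  shows "\<bar>ins \<tau> p v i\<bar> = int (Suc m) \<longleftrightarrow> i = p"
proof -
  have h: "\<bar>\<tau> j\<bar> \<noteq> int (Suc m)" for j using SP_abs_le[OF t, of j] by linarith
  show ?thesis using v h by (auto simp: ins_def)
qed

lemma ins_inj:
  assumes "\<tau>1 \<in> SP m" "\<tau>2 \<in> SP m" "\<bar>v1\<bar> = int (Suc m)" "\<bar>v2\<bar> = int (Suc m)"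
    and e: "ins \<tau>1 p1 v1 = ins \<tau>2 p2 v2"
  shows "p1 = p2 \<and> v1 = v2 \<and> \<tau>1 = \<tau>2"
proof -
  have "\<bar>ins \<tau>2 p2 v2 p1\<bar> = int (Suc m)" using e ins_abs[OF assms(1,3), of p1 p1] by simp
  then have p: "p1 = p2" using ins_abs[OF assms(2,4)] by simp
  have "ins \<tau>1 p1 v1 p1 = ins \<tau>2 p2 v2 p1" using e by simp
  then have "v1 = v2" using p by (simp add: ins_def)
  moreover have "\<tau>1 = \<tau>2" using del_ins[of \<tau>1 p1 v1] del_ins[of \<tau>2 p2 v2] e p by simp
  ultimately show ?thesis using p by simp
qed

lemma sum_SP_Suc:
  "(\<Sum>\<sigma>\<in>SP (Suc m). F \<sigma>) =
   (\<Sum>\<tau>\<in>SP m. \<Sum>p\<in>{1..Suc m}. \<Sum>s\<in>{1::int,-1}. F (ins \<tau> p (s * int (Suc m))))"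
proof -
  let ?A = "SP m \<times> ({1..Suc m} \<times> {1::int,-1})"
  let ?phi = "\<lambda>(\<tau>, p, s). ins \<tau> p (s * int (Suc m))"
  have inj: "inj_on ?phi ?A"
  proof (rule inj_onI)
    fix x y assume a: "x \<in> ?A" "y \<in> ?A" "?phi x = ?phi y"
    obtain t1 p1 s1 where x: "x = (t1, p1, s1)" by (cases x) auto
    obtain t2 p2 s2 where y: "y = (t2, p2, s2)" by (cases y) auto
    have s: "\<bar>s1 * int (Suc m)\<bar> = int (Suc m)" "\<bar>s2 * int (Suc m)\<bar> = int (Suc m)"
      using a x y by (auto simp: abs_mult)
    have e: "ins t1 p1 (s1 * int (Suc m)) = ins t2 p2 (s2 * int (Suc m))" using a(3) x y by simp
    have "t1 \<in> SP m" "t2 \<in> SP m" using a x y by auto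
    from ins_inj[OF this s e] have "t1 = t2 \<and> p1 = p2 \<and> s1 = s2" by simp
    then show "x = y" using x y by simp
  qed
  have im: "?phi ` ?A = SP (Suc m)"
  proof
    show "?phi ` ?A \<subseteq> SP (Suc m)"
      by (auto intro!: ins_SP simp: abs_mult)
  next
    show "SP (Suc m) \<subseteq> ?phi ` ?A"
    proof
      fix \<sigma> assume "\<sigma> \<in> SP (Suc m)"
      from SP_Suc_decomp[OF this] obtain \<tau> p v where tv: "\<tau> \<in> SP m" "p \<in> {1..Suc m}"
        "\<bar>v\<bar> = int (Suc m)" "\<sigma> = ins \<tau> p v" by blast
      define s where "s = sgn v"
      have "s \<in> {1, -1}" "v = s * int (Suc m)" using tv(3) by (auto simp: s_def sgn_if)
      then show "\<sigma> \<in> ?phi ` ?A" using tv by (intro image_eqI[of _ _ "(\<tau>, p, s)"]) auto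
    qed
  qed
  have "(\<Sum>\<sigma>\<in>SP (Suc m). F \<sigma>) = (\<Sum>x\<in>?A. F (?phi x))"
    using sum.reindex[OF inj, of F] im by simp
  also have "\<dots> = (\<Sum>\<tau>\<in>SP m. \<Sum>x\<in>{1..Suc m} \<times> {1::int,-1}. F (?phi (\<tau>, x)))"
    by (subst sum.cartesian_product) (simp add: split_def)
  also have "\<dots> = (\<Sum>\<tau>\<in>SP m. \<Sum>p\<in>{1..Suc m}. \<Sum>s\<in>{1::int,-1}. F (ins \<tau> p (s * int (Suc m))))"
    by (rule sum.cong[OF refl], subst sum.cartesian_product) (simp add: split_def)
  finally show ?thesis .
qed


definition dsc :: "(nat \<Rightarrow> int) \<Rightarrow> nat \<Rightarrow> nat" where
  "dsc \<sigma> i = of_bool (\<sigma> (Suc i) < \<sigma> i)"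

definition DD :: "nat \<Rightarrow> (nat \<Rightarrow> int) \<Rightarrow> nat" where
  "DD n \<sigma> = card {i \<in> {0..n}. \<sigma> (Suc i) < \<sigma> i}"

lemma DD_sum: "DD n \<sigma> = (\<Sum>i<Suc n. dsc \<sigma> i)"
proof -
  have "(\<Sum>i<Suc n. dsc \<sigma> i) = card ({..<Suc n} \<inter> {i. \<sigma> (Suc i) < \<sigma> i})"
    unfolding dsc_def by (subst sum_of_bool_eq) auto
  also have "{..<Suc n} \<inter> {i. \<sigma> (Suc i) < \<sigma> i} = {i \<in> {0..n}. \<sigma> (Suc i) < \<sigma> i}" by auto
  finally show ?thesis by (simp add: DD_def)
qed

lemma sum_lessThan_add: "(\<Sum>i<a+(b::nat). f i) = (\<Sum>i<a. f i) + (\<Sum>i<b. f (a+i))"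
  by (induct b) (simp_all add: add.assoc)

lemma DD_ins:
  assumes t: "\<tau> \<in> SP m" and p: "p \<in> {1..Suc m}" and v: "\<bar>v\<bar> = int (Suc m)"
  shows "DD (Suc m) (ins \<tau> p v) + dsc \<tau> (p - 1) = DD m \<tau> + 1"
proof -
  let ?s = "ins \<tau> p v"
  obtain k where k: "p = Suc k" using p by (cases p) auto
  have km: "k \<le> m" using p k by auto
  obtain r where r: "m = k + r" using km le_Suc_ex by blast
  have bnd: "\<bar>\<tau> j\<bar> < \<bar>v\<bar>" for j using SP_abs_le[OF t, of j] v by linarith
  have e1: "(\<Sum>i<k. dsc ?s i) = (\<Sum>i<k. dsc \<tau> i)"
    by (rule sum.cong) (auto simp: dsc_def ins_def k)
  have e2: "(\<Sum>i<r. dsc ?s (k + Suc (Suc i))) = (\<Sum>i<r. dsc \<tau> (k + Suc i))"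
    by (rule sum.cong) (auto simp: dsc_def ins_def k)
  have e3: "dsc ?s k + dsc ?s (Suc k) = 1"
    using bnd[of k] bnd[of "Suc k"] by (auto simp: dsc_def ins_def k abs_if split: if_splits)
  have "DD (Suc m) ?s = (\<Sum>i<k + Suc (Suc r). dsc ?s i)" by (simp add: DD_sum r)
  also have "\<dots> = (\<Sum>i<k. dsc ?s i) + (dsc ?s k + dsc ?s (Suc k)) + (\<Sum>i<r. dsc ?s (k + Suc (Suc i)))"
    unfolding sum_lessThan_add sum.lessThan_Suc_shift by simp
  finally have A: "DD (Suc m) ?s = (\<Sum>i<k. dsc \<tau> i) + 1 + (\<Sum>i<r. dsc \<tau> (k + Suc i))"
    using e1 e2 e3 by simp
  have "DD m \<tau> = (\<Sum>i<k + Suc r. dsc \<tau> i)" by (simp add: DD_sum r)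
  also have "\<dots> = (\<Sum>i<k. dsc \<tau> i) + dsc \<tau> k + (\<Sum>i<r. dsc \<tau> (k + Suc i))"
    unfolding sum_lessThan_add sum.lessThan_Suc_shift by simp
  finally show ?thesis using A k by simp
qed

lemma ins_1: "0 < p \<Longrightarrow> ins \<tau> p v 1 = (if p = 1 then v else \<tau> 1)"
  by (auto simp: ins_def)

lemma ins_last: "p \<le> Suc m \<Longrightarrow> ins \<tau> p v (Suc m) = (if p = Suc m then v else \<tau> m)"
  by (auto simp: ins_def)


definition sgp :: "bool \<Rightarrow> int \<Rightarrow> bool" where
  "sgp e x = (if e then 0 < x else x < 0)"

definition clsP :: "nat \<Rightarrow> bool \<Rightarrow> bool \<Rightarrow> (nat \<Rightarrow> int) \<Rightarrow> bool" where
  "clsP n e d \<sigma> = (sgp e (\<sigma> 1) \<and> sgp d (\<sigma> n))"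

definition Gs :: "nat \<Rightarrow> bool \<Rightarrow> bool \<Rightarrow> int fps" where
  "Gs n e d = (\<Sum>\<sigma>\<in>SP n. if clsP n e d \<sigma> then fps_X ^ DD n \<sigma> else 0)"

definition cc :: "bool \<Rightarrow> bool \<Rightarrow> int" where
  "cc e d = (if e then 0 else 1) + (if d then 1 else 0)"

lemma sum_two: "(\<Sum>s\<in>{1::int,-1}. f s) = f 1 + f (-1)"
  by simp

lemma X_deriv_X_power: "fps_X * fps_deriv (fps_X ^ n :: int fps) = of_nat n * fps_X ^ n"
proof -
  have "fps_nth (fps_X * fps_deriv (fps_X ^ n :: int fps)) j = fps_nth (of_nat n * fps_X ^ n :: int fps) j" for j
  proof (cases j)
    case 0 then show ?thesis by (simp add: fps_of_nat[symmetric] fps_X_power_nth)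
  next
    case (Suc i) then show ?thesis by (simp add: fps_of_nat[symmetric] fps_X_power_nth fps_deriv_nth)
  qed
  then show ?thesis by (simp add: fps_eq_iff)
qed

lemma sum_Suc_Suc_split:
  "(\<Sum>p\<in>{1..Suc (Suc k)}. g p) = g 1 + g (Suc (Suc k)) + (\<Sum>i<k. g (Suc (Suc i)))"
proof -
  have "(\<Sum>p\<in>{1..Suc (Suc k)}. g p) = (\<Sum>i<Suc (Suc k). g (Suc i))"
    using sum.atLeast1_atMost_eq[of g "Suc (Suc k)"] by simp
  also have "\<dots> = g 1 + (\<Sum>i<Suc k. g (Suc (Suc i)))"
    by (subst sum.lessThan_Suc_shift) simp
  also have "\<dots> = g 1 + g (Suc (Suc k)) + (\<Sum>i<k. g (Suc (Suc i)))"
    by (simp add: ac_simps)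
  finally show ?thesis .
qed

lemma DD_split: "DD (Suc k) \<tau> = dsc \<tau> 0 + (\<Sum>i<k. dsc \<tau> (Suc i)) + dsc \<tau> (Suc k)"
  unfolding DD_sum by (subst sum.lessThan_Suc_shift) simp

lemma interior_sum:
  fixes D :: nat and f :: "nat \<Rightarrow> nat"
  assumes "\<And>i. f i \<le> 1"
  shows "(\<Sum>i<k. fps_X ^ (D + 1 - f i) :: int fps) =
     of_nat (\<Sum>i<k. f i) * fps_X ^ D + of_int (int k - int (\<Sum>i<k. f i)) * fps_X ^ (D + 1)"
proof (induction k)
  case 0 then show ?case by simp
next
  case (Suc k)
  have "f k = 0 \<or> f k = 1" using assms[of k] by auto
  then show ?case using Suc by (auto simp: algebra_simps of_nat_diff)
qed


lemma DD_ins':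
  assumes t: "\<tau> \<in> SP m" and p: "p \<in> {1..Suc m}" and v: "\<bar>v\<bar> = int (Suc m)"
  shows "DD (Suc m) (ins \<tau> p v) = DD m \<tau> + 1 - dsc \<tau> (p - 1)"
  using DD_ins[OF assms] by simp

lemma dsc_le1: "dsc \<tau> i \<le> 1" by (simp add: dsc_def)

lemma inner_eq:
  assumes t: "\<tau> \<in> SP (Suc k)"
  shows "(\<Sum>p\<in>{1..Suc (Suc k)}. \<Sum>s\<in>{1::int,-1}.
           (if clsP (Suc (Suc k)) e d (ins \<tau> p (s * int (Suc (Suc k))))
            then fps_X ^ DD (Suc (Suc k)) (ins \<tau> p (s * int (Suc (Suc k)))) else (0 :: int fps))) =
    fps_X * (if clsP (Suc k) True d \<tau> then fps_X ^ DD (Suc k) \<tau> else 0)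
    + (if clsP (Suc k) False d \<tau> then fps_X ^ DD (Suc k) \<tau> else 0)
    + (if clsP (Suc k) e True \<tau> then fps_X ^ DD (Suc k) \<tau> else 0)
    + fps_X * (if clsP (Suc k) e False \<tau> then fps_X ^ DD (Suc k) \<tau> else 0)
    + 2 * (fps_X * (1 - fps_X) * fps_deriv (if clsP (Suc k) e d \<tau> then fps_X ^ DD (Suc k) \<tau> else 0)
           + (of_int (int k + cc e d) * fps_X - of_int (cc e d)) *
             (if clsP (Suc k) e d \<tau> then fps_X ^ DD (Suc k) \<tau> else 0))"
  (is "?L = ?R")
proof -
  define D where "D = DD (Suc k) \<tau>"
  define a where "a = \<tau> 1"
  define b where "b = \<tau> (Suc k)"
  define S where "S = (\<Sum>i<k. dsc \<tau> (Suc i))"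
  define M where "M = int (Suc (Suc k))"
  have a0: "a \<noteq> 0" unfolding a_def by (rule SP_nonzero[OF t]) auto
  have b0: "b \<noteq> 0" unfolding b_def by (rule SP_nonzero[OF t]) auto
  have d0: "dsc \<tau> 0 = of_bool (a < 0)" using SP_0[OF t] by (simp add: dsc_def a_def)
  have dl: "dsc \<tau> (Suc k) = of_bool (0 < b)" using SP_big[OF t, of "Suc (Suc k)"] by (simp add: dsc_def b_def)
  have DS: "D = dsc \<tau> 0 + S + dsc \<tau> (Suc k)" unfolding D_def S_def by (rule DD_split)
  have absM: "\<bar>s * M\<bar> = int (Suc (Suc k))" if "s \<in> {1, -1}" for s
    using that by (auto simp: M_def)
  have DDi: "DD (Suc (Suc k)) (ins \<tau> p (s * M)) = D + 1 - dsc \<tau> (p - 1)"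
    if "p \<in> {1..Suc (Suc k)}" "s \<in> {1, -1}" for p s
    unfolding D_def by (rule DD_ins'[OF t that(1) absM[OF that(2)]])
  let ?F = "\<lambda>p s. (if clsP (Suc (Suc k)) e d (ins \<tau> p (s * M))
            then fps_X ^ DD (Suc (Suc k)) (ins \<tau> p (s * M)) else 0 :: int fps)"
  have sgpM: "sgp e M \<noteq> sgp e (- M)" "sgp e (- M) = (\<not> sgp e M)" for e
    by (auto simp: sgp_def M_def)
  have T1: "(\<Sum>s\<in>{1::int,-1}. ?F 1 s) = (if sgp d b then fps_X ^ (D + 1 - dsc \<tau> 0) else 0)"
  proof -
    have "?F 1 s = (if sgp e (s * M) \<and> sgp d b then fps_X ^ (D + 1 - dsc \<tau> 0) else 0)"
      if "s \<in> {1,-1}" for s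
      using DDi[of 1 s] that by (simp add: clsP_def ins_1 ins_last b_def)
    then show ?thesis using sgpM[of e] by (auto simp: sum_two)
  qed
  have T2: "(\<Sum>s\<in>{1::int,-1}. ?F (Suc (Suc k)) s) = (if sgp e a then fps_X ^ (D + 1 - dsc \<tau> (Suc k)) else 0)"
  proof -
    have "?F (Suc (Suc k)) s = (if sgp e a \<and> sgp d (s * M) then fps_X ^ (D + 1 - dsc \<tau> (Suc k)) else 0)"
      if "s \<in> {1,-1}" for s
      using DDi[of "Suc (Suc k)" s] that by (simp add: clsP_def ins_def a_def)
    then show ?thesis using sgpM[of d] by (auto simp: sum_two)
  qed
  have T3: "(\<Sum>s\<in>{1::int,-1}. ?F (Suc (Suc i)) s) =
      (if sgp e a \<and> sgp d b then 2 * fps_X ^ (D + 1 - dsc \<tau> (Suc i)) else 0)" if "i < k" for i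
  proof -
    have "?F (Suc (Suc i)) s = (if sgp e a \<and> sgp d b then fps_X ^ (D + 1 - dsc \<tau> (Suc i)) else 0)"
      if "s \<in> {1,-1}" for s
      using DDi[of "Suc (Suc i)" s] that \<open>i < k\<close> by (simp add: clsP_def ins_def a_def b_def)
    then show ?thesis by (simp add: sum_two)
  qed
  have "?L = (\<Sum>p\<in>{1..Suc (Suc k)}. \<Sum>s\<in>{1::int,-1}. ?F p s)" by (simp only: M_def)
  also have "\<dots> = (if sgp d b then fps_X ^ (D + 1 - dsc \<tau> 0) else 0)
      + (if sgp e a then fps_X ^ (D + 1 - dsc \<tau> (Suc k)) else 0)
      + (\<Sum>i<k. (if sgp e a \<and> sgp d b then 2 * fps_X ^ (D + 1 - dsc \<tau> (Suc i)) else 0))"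
  proof -
    have T3s: "(\<Sum>i<k. \<Sum>s\<in>{1::int,-1}. ?F (Suc (Suc i)) s) =
      (\<Sum>i<k. (if sgp e a \<and> sgp d b then 2 * fps_X ^ (D + 1 - dsc \<tau> (Suc i)) else 0))"
      by (rule sum.cong) (auto simp only: T3 lessThan_iff)
    show ?thesis by (simp only: sum_Suc_Suc_split T1 T2 T3s)
  qed
  also have "(\<Sum>i<k. (if sgp e a \<and> sgp d b then 2 * fps_X ^ (D + 1 - dsc \<tau> (Suc i)) else (0::int fps))) =
     (if sgp e a \<and> sgp d b then 2 * (of_nat S * fps_X ^ D + of_int (int k - int S) * fps_X ^ (D + 1)) else 0)"
  proof (cases "sgp e a \<and> sgp d b")
    case True
    have I: "(\<Sum>i<k. fps_X ^ (D + 1 - dsc \<tau> (Suc i)) :: int fps) =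
      of_nat S * fps_X ^ D + of_int (int k - int S) * fps_X ^ (D + 1)"
      using interior_sum[where f="\<lambda>i. dsc \<tau> (Suc i)" and k=k and D=D, OF dsc_le1]
      by (simp only: S_def)
    have "(\<Sum>i<k. (if sgp e a \<and> sgp d b then 2 * fps_X ^ (D + 1 - dsc \<tau> (Suc i)) else 0)) =
        2 * (\<Sum>i<k. fps_X ^ (D + 1 - dsc \<tau> (Suc i)) :: int fps)"
      using True by (simp add: sum_distrib_left)
    then show ?thesis using True I by simp
  next
    case False
    show ?thesis by (simp only: if_not_P[OF False] sum.neutral_const)
  qed
  finally have L: "?L = (if sgp d b then fps_X ^ (D + 1 - dsc \<tau> 0) else 0)
      + (if sgp e a then fps_X ^ (D + 1 - dsc \<tau> (Suc k)) else 0)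
      + (if sgp e a \<and> sgp d b then 2 * (of_nat S * fps_X ^ D + of_int (int k - int S) * fps_X ^ (D + 1)) else 0)" .
  have der: "fps_X * (1 - fps_X) * fps_deriv (fps_X ^ D :: int fps) = (1 - fps_X) * (of_nat D * fps_X ^ D)"
    using X_deriv_X_power[of D] by (simp add: algebra_simps)
  have R: "?R = fps_X * (if sgp True a \<and> sgp d b then fps_X ^ D else 0)
    + (if sgp False a \<and> sgp d b then fps_X ^ D else 0)
    + (if sgp e a \<and> sgp True b then fps_X ^ D else 0)
    + fps_X * (if sgp e a \<and> sgp False b then fps_X ^ D else 0)
    + (if sgp e a \<and> sgp d b then 2 * ((1 - fps_X) * (of_nat D * fps_X ^ D)
           + (of_int (int k + cc e d) * fps_X - of_int (cc e d)) * fps_X ^ D) else 0)"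
    by (simp add: clsP_def a_def b_def D_def der X_deriv_X_power)
  have SD: "int S = int D - of_bool (a < 0) - of_bool (0 < b)" using DS d0 dl by simp
  have ofS: "(of_nat S :: int fps) = of_int (int D - of_bool (a < 0) - of_bool (0 < b))"
    using SD by (metis of_int_of_nat_eq)
  show ?thesis
    unfolding L R DS d0 dl
    using a0 b0
    by (cases e; cases d; cases "0 < a"; cases "0 < b")
       (auto simp: sgp_def cc_def algebra_simps of_int_diff)
qed


lemma Gs_rec:
  "Gs (Suc (Suc k)) e d = fps_X * Gs (Suc k) True d + Gs (Suc k) False d + Gs (Suc k) e True
     + fps_X * Gs (Suc k) e False
     + 2 * (fps_X * (1 - fps_X) * fps_deriv (Gs (Suc k) e d)
            + (of_int (int k + cc e d) * fps_X - of_int (cc e d)) * Gs (Suc k) e d)"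
proof -
  have "Gs (Suc (Suc k)) e d = (\<Sum>\<tau>\<in>SP (Suc k). \<Sum>p\<in>{1..Suc (Suc k)}. \<Sum>s\<in>{1::int,-1}.
           (if clsP (Suc (Suc k)) e d (ins \<tau> p (s * int (Suc (Suc k))))
            then fps_X ^ DD (Suc (Suc k)) (ins \<tau> p (s * int (Suc (Suc k)))) else (0 :: int fps)))"
    unfolding Gs_def by (rule sum_SP_Suc)
  also have "\<dots> = (\<Sum>\<tau>\<in>SP (Suc k).
    fps_X * (if clsP (Suc k) True d \<tau> then fps_X ^ DD (Suc k) \<tau> else 0)
    + (if clsP (Suc k) False d \<tau> then fps_X ^ DD (Suc k) \<tau> else 0)
    + (if clsP (Suc k) e True \<tau> then fps_X ^ DD (Suc k) \<tau> else 0)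
    + fps_X * (if clsP (Suc k) e False \<tau> then fps_X ^ DD (Suc k) \<tau> else 0)
    + 2 * (fps_X * (1 - fps_X) * fps_deriv (if clsP (Suc k) e d \<tau> then fps_X ^ DD (Suc k) \<tau> else 0)
           + (of_int (int k + cc e d) * fps_X - of_int (cc e d)) *
             (if clsP (Suc k) e d \<tau> then fps_X ^ DD (Suc k) \<tau> else 0)))"
    by (rule sum.cong[OF refl], rule inner_eq)
  also have "\<dots> = fps_X * Gs (Suc k) True d + Gs (Suc k) False d + Gs (Suc k) e True
     + fps_X * Gs (Suc k) e False
     + 2 * (fps_X * (1 - fps_X) * fps_deriv (Gs (Suc k) e d)
            + (of_int (int k + cc e d) * fps_X - of_int (cc e d)) * Gs (Suc k) e d)"
    unfolding Gs_def by (simp add: sum.distrib sum_distrib_left sum_distrib_right fps_deriv_sum)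
  finally show ?thesis .
qed

definition q :: "nat \<Rightarrow> int \<Rightarrow> int" where
  "q n j = (if j < 0 then 0 else (j + 1) ^ n)"

definition E :: "nat \<Rightarrow> int \<Rightarrow> int" where
  "E n j = q n j - 2 * q n (j - 1) + q n (j - 2)"

definition Tf :: "nat \<Rightarrow> bool \<Rightarrow> bool \<Rightarrow> int fps" where
  "Tf n e d = Abs_fps (\<lambda>m. E n (2 * int m - 1 - cc e d))"

lemma q_Suc: "q (Suc n) j = (j + 1) * q n j"
  by (simp add: q_def)

lemma q_neg: "j < 0 \<Longrightarrow> q n j = 0"
  by (simp add: q_def)

lemma E_neg: "j < 0 \<Longrightarrow> E n j = 0"
  by (simp add: E_def q_def)

lemma Tf_nth: "fps_nth (Tf n e d) m = E n (2 * int m - 1 - cc e d)"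
  by (simp add: Tf_def)

lemma cc_ge0: "0 \<le> cc e d" by (simp add: cc_def)

lemma nth_X_deriv: "fps_nth (fps_X * fps_deriv F) j = of_nat j * fps_nth F j"
  by (cases j) (simp_all add: fps_deriv_nth)

lemma nth_of_int_mult: "fps_nth (of_int a * F) j = a * fps_nth F j" for F :: "int fps"
  by (simp add: fps_of_int[symmetric])

lemma nth_of_nat_mult: "fps_nth (of_nat a * F) j = int a * fps_nth F j" for F :: "int fps"
  by (simp add: fps_of_nat[symmetric])

lemma nth_2_mult: "fps_nth (2 * F) j = 2 * fps_nth F j" for F :: "int fps"
  by (simp add: fps_numeral_fps_const)

lemma key_identity:
  "(1 - fps_X) * Tf (Suc (Suc k)) e d =
     fps_X * Tf (Suc k) True d + Tf (Suc k) False d + Tf (Suc k) e True + fps_X * Tf (Suc k) e False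
     + 2 * (fps_X * (1 - fps_X) * fps_deriv (Tf (Suc k) e d) - of_nat k * fps_X * Tf (Suc k) e d
            + (of_int (int k + cc e d) * fps_X - of_int (cc e d)) * Tf (Suc k) e d)"
proof -
  define T where "T = Tf (Suc k) e d"
  define XD where "XD = fps_X * fps_deriv T"
  have XD_nth: "fps_nth XD j = int j * fps_nth T j" for j
    unfolding XD_def by (simp add: nth_X_deriv)
  have X1: "(1 - fps_X) * F = F - fps_X * F" for F :: "int fps" by (simp add: algebra_simps)
  have R: "fps_X * (1 - fps_X) * fps_deriv T - of_nat k * fps_X * T
            + (of_int (int k + cc e d) * fps_X - of_int (cc e d)) * T
       = XD - fps_X * XD - of_nat k * (fps_X * T)
         + of_int (int k + cc e d) * (fps_X * T) - of_int (cc e d) * T"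
    unfolding XD_def by (simp add: algebra_simps)
  show ?thesis
    unfolding T_def[symmetric] R X1
  proof (subst fps_eq_iff, intro allI)
    fix j
    show "fps_nth (Tf (Suc (Suc k)) e d - fps_X * Tf (Suc (Suc k)) e d) j = fps_nth (
     fps_X * Tf (Suc k) True d + Tf (Suc k) False d + Tf (Suc k) e True + fps_X * Tf (Suc k) e False
     + 2 * (XD - fps_X * XD - of_nat k * (fps_X * T)
         + of_int (int k + cc e d) * (fps_X * T) - of_int (cc e d) * T)) j"
    proof (cases j)
      case 0
      then show ?thesis
        using cc_ge0[of e d] cc_ge0[of True d] cc_ge0[of False d] cc_ge0[of e True] cc_ge0[of e False]
        by (simp only: fps_add_nth fps_sub_nth nth_2_mult nth_of_int_mult nth_of_nat_mult XD_nth
            fps_X_mult_nth) (simp add: E_neg T_def Tf_nth)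
    next
      case (Suc i)
      then show ?thesis
        by (simp only: fps_add_nth fps_sub_nth nth_2_mult nth_of_int_mult nth_of_nat_mult XD_nth
            fps_X_mult_nth)
           (cases e; cases d; simp add: T_def Tf_nth E_def q_Suc cc_def algebra_simps)
    qed
  qed
qed


lemma SP_0_eq: "SP 0 = {\<lambda>_. 0}"
  unfolding signed_perms_def by (auto simp: fun_eq_iff bij_betw_def)

lemma E1: "E (Suc 0) j = (if j = 0 then 1 else 0)"
  by (simp add: E_def q_def)

lemma Gs_1: "Gs 1 e d = Tf 1 e d"
proof -
  let ?z = "(\<lambda>_. 0) :: nat \<Rightarrow> int"
  have DD1: "DD (Suc 0) (ins ?z 1 v) = 1" if "\<bar>v\<bar> = 1" for v
    using DD_ins'[of ?z 0 1 v] that SP_0_eq by (simp add: DD_def dsc_def)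
  have cl: "clsP (Suc 0) e d (ins ?z 1 v) = (sgp e v \<and> sgp d v)" for v
    by (simp add: clsP_def ins_def)
  have "Gs (Suc 0) e d = (\<Sum>\<tau>\<in>SP 0. \<Sum>p\<in>{1..Suc 0}. \<Sum>s\<in>{1::int,-1}.
           (if clsP (Suc 0) e d (ins \<tau> p (s * int (Suc 0)))
            then fps_X ^ DD (Suc 0) (ins \<tau> p (s * int (Suc 0))) else (0 :: int fps)))"
    unfolding Gs_def by (rule sum_SP_Suc)
  also have "\<dots> = (if e = d then fps_X else 0)"
    using DD1[of 1] DD1[of "-1"] cl[of 1] cl[of "-1"] SP_0_eq
    by (cases e; cases d) (simp_all add: sgp_def)
  finally have G: "Gs 1 e d = (if e = d then fps_X else 0)" by simp
  have "fps_nth (Tf 1 e d) m = fps_nth (if e = d then fps_X else 0 :: int fps) m" for m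
    by (cases e; cases d) (auto simp: Tf_nth E1 cc_def fps_X_nth, presburger+)
  then show ?thesis using G by (simp add: fps_eq_iff)
qed

lemma deriv_1mX_pow:
  "fps_X * (1 - fps_X) * fps_deriv ((1 - fps_X) ^ k * T) =
   (1 - fps_X) ^ k * (fps_X * (1 - fps_X) * fps_deriv T) - of_nat k * fps_X * (1 - fps_X) ^ k * (T :: int fps)"
proof -
  have a: "of_nat k * ((1 - fps_X) * (1 - fps_X) ^ (k - 1)) = (of_nat k * (1 - fps_X) ^ k :: int fps)"
    by (cases k) simp_all
  have "fps_deriv ((1 - fps_X) ^ k :: int fps) = - (of_nat k * (1 - fps_X) ^ (k - 1))"
    by (simp add: fps_deriv_power')
  then have "fps_X * (1 - fps_X) * fps_deriv ((1 - fps_X) ^ k * T) =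
     (1 - fps_X) ^ k * (fps_X * (1 - fps_X) * fps_deriv T) - fps_X * T * (of_nat k * ((1 - fps_X) * (1 - fps_X) ^ (k - 1)))"
    by (simp add: algebra_simps)
  then show ?thesis unfolding a by (simp add: algebra_simps)
qed

lemma Gs_closed: "Gs (Suc k) e d = (1 - fps_X) ^ k * Tf (Suc k) e d"
proof (induction k arbitrary: e d)
  case 0 then show ?case using Gs_1 by simp
next
  case (Suc k)
  let ?P = "(1 - fps_X) ^ k :: int fps"
  have "Gs (Suc (Suc k)) e d = ?P * (fps_X * Tf (Suc k) True d + Tf (Suc k) False d + Tf (Suc k) e True + fps_X * Tf (Suc k) e False
     + 2 * (fps_X * (1 - fps_X) * fps_deriv (Tf (Suc k) e d) - of_nat k * fps_X * Tf (Suc k) e d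
            + (of_int (int k + cc e d) * fps_X - of_int (cc e d)) * Tf (Suc k) e d))"
    unfolding Gs_rec Suc.IH deriv_1mX_pow by (simp add: algebra_simps)
  also have "\<dots> = ?P * ((1 - fps_X) * Tf (Suc (Suc k)) e d)" by (simp only: key_identity)
  finally show ?case by (simp add: algebra_simps)
qed


lemma X_mult_cancel: "fps_X * a = fps_X * (b :: int fps) \<Longrightarrow> a = b"
proof -
  assume h: "fps_X * a = fps_X * b"
  have "fps_nth a j = fps_nth b j" for j
    using arg_cong[OF h, of "\<lambda>f. fps_nth f (Suc j)"] by simp
  then show ?thesis by (simp add: fps_eq_iff)
qed

lemma DD_desB: assumes s: "\<sigma> \<in> SP n" and pos: "0 < \<sigma> n"
  shows "DD n \<sigma> = desB n \<sigma> + 1"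
proof -
  have z: "\<sigma> (Suc n) = 0" using SP_big[OF s, of "Suc n"] by simp
  have "{i \<in> {0..n}. \<sigma> (Suc i) < \<sigma> i} = insert n {i \<in> {0..<n}. \<sigma> i > \<sigma> (Suc i)}"
    using z pos by auto
  then show ?thesis unfolding DD_def desB_def by simp
qed

lemma Bpp_closed:
  assumes n: "n \<ge> 1"
  shows "fps_of_poly (Bpp n) = (1 - fps_X) ^ (n - 1) * Abs_fps (\<lambda>m. E n (2 * int m))"
proof -
  obtain k where k: "n = Suc k" using n by (cases n) auto
  let ?A = "{\<sigma> \<in> SP n. 0 < \<sigma> 1 \<and> 0 < \<sigma> n}"
  have "fps_X * fps_of_poly (Bpp n) = (\<Sum>\<sigma>\<in>?A. fps_X * fps_X ^ desB n \<sigma>)"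
    unfolding Bpp_def by (simp add: fps_of_poly_sum fps_of_poly_monom' sum_distrib_left)
  also have "\<dots> = (\<Sum>\<sigma>\<in>?A. fps_X ^ DD n \<sigma>)"
    by (rule sum.cong) (auto simp: DD_desB)
  also have "\<dots> = Gs n True True"
    unfolding Gs_def clsP_def sgp_def using SP_finite[of n] by (simp add: sum.inter_filter)
  also have "\<dots> = (1 - fps_X) ^ k * Tf n True True" using Gs_closed k by simp
  also have "Tf n True True = fps_X * Abs_fps (\<lambda>m. E n (2 * int m))"
  proof -
    have "fps_nth (Tf n True True) j = fps_nth (fps_X * Abs_fps (\<lambda>m. E n (2 * int m))) j" for j
      by (cases j) (simp_all add: Tf_nth cc_def E_neg algebra_simps)
    then show ?thesis by (simp add: fps_eq_iff)
  qed
  finally have "fps_X * fps_of_poly (Bpp n) = fps_X * ((1 - fps_X) ^ k * Abs_fps (\<lambda>m. E n (2 * int m)))"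
    by (simp add: algebra_simps)
  then show ?thesis using k X_mult_cancel by simp
qed



definition chainI :: "(nat set \<times> nat set) set \<Rightarrow> bool" where
  "chainI C = (\<forall>x\<in>C. \<forall>y\<in>C. interval_le x y \<or> interval_le y x)"

lemma ile_refl: "interval_le x x" by (simp add: interval_le_def)
lemma ile_trans: "interval_le x y \<Longrightarrow> interval_le y z \<Longrightarrow> interval_le x z"
  by (auto simp: interval_le_def)
lemma ile_antisym: "interval_le x y \<Longrightarrow> interval_le y x \<Longrightarrow> x = y"
  by (auto simp: interval_le_def prod_eq_iff)

lemma chain_subset: "chainI C \<Longrightarrow> D \<subseteq> C \<Longrightarrow> chainI D"
  by (auto simp: chainI_def)

lemma chain_max:
  assumes "finite C" "C \<noteq> {}" "chainI C"
  shows "\<exists>t\<in>C. \<forall>x\<in>C. interval_le x t"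
  using assms
proof (induction C rule: finite_ne_induct)
  case (singleton x) then show ?case by (auto simp: ile_refl)
next
  case (insert x F)
  then have "chainI F" by (auto intro: chain_subset)
  with insert obtain t where t: "t \<in> F" "\<forall>y\<in>F. interval_le y t" by auto
  have "interval_le x t \<or> interval_le t x" using insert(5) t(1) by (auto simp: chainI_def)
  then show ?case
  proof
    assume "interval_le x t" then show ?thesis using t by (auto simp: ile_refl)
  next
    assume "interval_le t x" then show ?thesis using t by (auto intro: ile_trans ile_refl)
  qed
qed

definition monoM :: "nat \<Rightarrow> (nat \<Rightarrow> nat set \<times> nat set) \<Rightarrow> bool" where
  "monoM l M = (\<forall>i j. i \<le> j \<longrightarrow> j < l \<longrightarrow> interval_le (M i) (M j))"

definition MS :: "nat \<Rightarrow> (nat set \<times> nat set) set \<Rightarrow> (nat \<Rightarrow> nat set \<times> nat set) set" where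
  "MS l C = {M \<in> {0..<l} \<rightarrow>\<^sub>E C. monoM l M \<and> M ` {0..<l} = C}"

lemma MS_finite: "finite C \<Longrightarrow> finite (MS l C)"
  unfolding MS_def by (rule finite_subset[of _ "{0..<l} \<rightarrow>\<^sub>E C"]) (auto intro: finite_PiE)

lemma MS_1: 
  assumes "card C = Suc r" "finite C"
  shows "card (MS (Suc 0) C) = 0 choose r"
proof (cases r)
  case 0
  then have "card C = Suc 0" using assms by simp
  then obtain c where c: "C = {c}" by (meson card_1_singleton_iff)
  have "MS (Suc 0) C = {(\<lambda>i\<in>{0..<Suc 0}. c)}"
    unfolding MS_def c monoM_def by (auto simp: PiE_def extensional_def fun_eq_iff ile_refl)
  then show ?thesis using 0 by simp
next
  case (Suc r')
  have "MS (Suc 0) C = {}"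
  proof (rule ccontr)
    assume "MS (Suc 0) C \<noteq> {}"
    then obtain M where "M ` {0..<Suc 0} = C" unfolding MS_def by auto
    then have "C = {M 0}" by auto
    then show False using assms Suc by simp
  qed
  then show ?thesis using Suc by simp
qed

lemma MS_step:
  assumes fin: "finite C" and ch: "chainI C" and t: "t \<in> C" "\<forall>x\<in>C. interval_le x t"
  shows "bij_betw (\<lambda>M. restrict M {0..<Suc l}) (MS (Suc (Suc l)) C) (MS (Suc l) C \<union> MS (Suc l) (C - {t}))"
proof (rule bij_betwI[where g = "\<lambda>M'. M'(Suc l := t)"])
  show "(\<lambda>M. restrict M {0..<Suc l}) \<in> MS (Suc (Suc l)) C \<rightarrow> MS (Suc l) C \<union> MS (Suc l) (C - {t})"
  proof
    fix M assume M: "M \<in> MS (Suc (Suc l)) C"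
    let ?M' = "restrict M {0..<Suc l}"
    have mono: "monoM (Suc (Suc l)) M" and im: "M ` {0..<Suc (Suc l)} = C" and pi: "M \<in> {0..<Suc (Suc l)} \<rightarrow>\<^sub>E C"
      using M by (auto simp: MS_def)
    have Ml: "M (Suc l) = t"
    proof -
      obtain i where i: "i < Suc (Suc l)" "M i = t" using t(1) im by force
      have "interval_le (M i) (M (Suc l))" using mono i by (auto simp: monoM_def)
      moreover have "interval_le (M (Suc l)) t" using t(2) pi by auto
      ultimately show ?thesis using i ile_antisym by auto
    qed
    have imM: "C = ?M' ` {0..<Suc l} \<union> {t}"
    proof -
      have "{0..<Suc (Suc l)} = insert (Suc l) {0..<Suc l}" by auto
      then show ?thesis using im Ml by auto
    qed
    have pi': "?M' \<in> {0..<Suc l} \<rightarrow>\<^sub>E C" using pi by auto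
    have mono': "monoM (Suc l) ?M'" using mono by (auto simp: monoM_def)
    show "?M' \<in> MS (Suc l) C \<union> MS (Suc l) (C - {t})"
    proof (cases "t \<in> ?M' ` {0..<Suc l}")
      case True
      then have "?M' ` {0..<Suc l} = C" using imM by auto
      then show ?thesis using pi' mono' by (auto simp: MS_def)
    next
      case False
      then have "?M' ` {0..<Suc l} = C - {t}" using imM by auto
      moreover have "?M' \<in> {0..<Suc l} \<rightarrow>\<^sub>E C - {t}" using pi' False by (auto simp: PiE_def Pi_def)
      ultimately show ?thesis using mono' by (auto simp: MS_def)
    qed
  qed
next
  show "(\<lambda>M'. M'(Suc l := t)) \<in> MS (Suc l) C \<union> MS (Suc l) (C - {t}) \<rightarrow> MS (Suc (Suc l)) C"
  proof
    fix M' assume M': "M' \<in> MS (Suc l) C \<union> MS (Suc l) (C - {t})"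
    then have pi: "M' \<in> {0..<Suc l} \<rightarrow>\<^sub>E C" and mono: "monoM (Suc l) M'"
      and im: "M' ` {0..<Suc l} = C \<or> M' ` {0..<Suc l} = C - {t}"
      by (auto simp: MS_def PiE_def Pi_def)
    let ?M = "M'(Suc l := t)"
    have "?M \<in> {0..<Suc (Suc l)} \<rightarrow>\<^sub>E C" using pi t(1) by (auto simp: PiE_def Pi_def extensional_def)
    moreover have "monoM (Suc (Suc l)) ?M"
      unfolding monoM_def
    proof (intro allI impI)
      fix i j assume ij: "i \<le> j" "j < Suc (Suc l)"
      show "interval_le (?M i) (?M j)"
      proof (cases "j = Suc l")
        case True
        then show ?thesis using t pi ij by (cases "i = Suc l") (auto simp: ile_refl)
      next
        case False
        then show ?thesis using mono ij by (auto simp: monoM_def)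
      qed
    qed
    moreover have "?M ` {0..<Suc (Suc l)} = C"
    proof -
      have "{0..<Suc (Suc l)} = insert (Suc l) {0..<Suc l}" by auto
      then have "?M ` {0..<Suc (Suc l)} = insert t (M' ` {0..<Suc l})" by auto
      then show ?thesis using im t(1) by auto
    qed
    ultimately show "?M \<in> MS (Suc (Suc l)) C" by (simp add: MS_def)
  qed
next
  fix M assume M: "M \<in> MS (Suc (Suc l)) C"
  have mono: "monoM (Suc (Suc l)) M" and im: "M ` {0..<Suc (Suc l)} = C" and pi: "M \<in> {0..<Suc (Suc l)} \<rightarrow>\<^sub>E C"
    using M by (auto simp: MS_def)
  have Ml: "M (Suc l) = t"
  proof -
    obtain i where i: "i < Suc (Suc l)" "M i = t" using t(1) im by force
    have "interval_le (M i) (M (Suc l))" using mono i by (auto simp: monoM_def)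
    moreover have "interval_le (M (Suc l)) t" using t(2) pi by auto
    ultimately show ?thesis using i ile_antisym by auto
  qed
  show "(restrict M {0..<Suc l})(Suc l := t) = M"
  proof
    fix i show "((restrict M {0..<Suc l})(Suc l := t)) i = M i"
      using Ml pi by (cases "i < Suc (Suc l)") (auto simp: PiE_def extensional_def)
  qed
next
  fix M' assume "M' \<in> MS (Suc l) C \<union> MS (Suc l) (C - {t})"
  then have pi: "M' \<in> extensional {0..<Suc l}" by (auto simp: MS_def PiE_def)
  show "restrict (M'(Suc l := t)) {0..<Suc l} = M'"
  proof
    fix i show "restrict (M'(Suc l := t)) {0..<Suc l} i = M' i"
      using pi by (auto simp: extensional_def)
  qed
qed

lemma MS_count:
  assumes "finite C" "chainI C" "card C = Suc r"
  shows "card (MS (Suc l) C) = l choose r"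
  using assms
proof (induction l arbitrary: C r)
  case 0 then show ?case using MS_1 by simp
next
  case (Suc l)
  have "C \<noteq> {}" using Suc.prems by auto
  then obtain t where t: "t \<in> C" "\<forall>x\<in>C. interval_le x t" using chain_max Suc.prems by blast
  have "card (MS (Suc (Suc l)) C) = card (MS (Suc l) C \<union> MS (Suc l) (C - {t}))"
    using bij_betw_same_card[OF MS_step[OF Suc.prems(1,2) t]] .
  also have "\<dots> = card (MS (Suc l) C) + card (MS (Suc l) (C - {t}))"
  proof (rule card_Un_disjoint)
    show "finite (MS (Suc l) C)" "finite (MS (Suc l) (C - {t}))" using Suc.prems by (auto intro: MS_finite)
    show "MS (Suc l) C \<inter> MS (Suc l) (C - {t}) = {}" using t(1) by (auto simp: MS_def)
  qed
  also have "card (MS (Suc l) C) = l choose r" using Suc.IH Suc.prems by blast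
  also have "card (MS (Suc l) (C - {t})) = (if r = 0 then 0 else l choose (r - 1))"
  proof (cases r)
    case 0
    then have "card C = Suc 0" using Suc.prems by simp
    then obtain x where "C = {x}" by (meson card_1_singleton_iff)
    then have "C - {t} = {}" using t(1) by auto
    have "MS (Suc l) {} = {}" by (auto simp: MS_def)
    then show ?thesis unfolding \<open>C - {t} = {}\<close> using 0 by simp
  next
    case (Suc r')
    have "card (C - {t}) = Suc r'" using Suc \<open>card C = Suc r\<close> t(1) \<open>finite C\<close> by simp
    moreover have "chainI (C - {t})" using \<open>chainI C\<close> by (auto intro: chain_subset)
    ultimately have "card (MS (Suc l) (C - {t})) = l choose r'"
      using Suc.IH[of "C - {t}" r'] \<open>finite C\<close> by simp
    then show ?thesis using Suc by simp
  qed
  finally show ?case by (cases r) simp_all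
qed


definition Pb :: "nat \<Rightarrow> (nat set \<times> nat set) set" where
  "Pb n = {I \<in> interval_poset n. snd I \<noteq> {1..n}}"

lemma Pb_iff: "I \<in> Pb n \<longleftrightarrow> fst I \<noteq> {} \<and> fst I \<subseteq> snd I \<and> snd I \<subseteq> {1..n} \<and> snd I \<noteq> {1..n}"
  by (cases I) (auto simp: Pb_def interval_poset_def)

definition MC :: "nat \<Rightarrow> nat \<Rightarrow> (nat \<Rightarrow> nat set \<times> nat set) set" where
  "MC n m = {M \<in> {0..<m} \<rightarrow>\<^sub>E Pb n. monoM m M}"

definition GG :: "nat \<Rightarrow> nat \<Rightarrow> (nat \<Rightarrow> nat) set" where
  "GG n m = {g \<in> {1..n} \<rightarrow>\<^sub>E {0..2*m}. (\<exists>x\<in>{1..n}. g x = 0) \<and> (\<exists>x\<in>{1..n}. g x = 2*m)}"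

definition Phi :: "nat \<Rightarrow> nat \<Rightarrow> (nat \<Rightarrow> nat) \<Rightarrow> nat \<Rightarrow> nat set \<times> nat set" where
  "Phi n m g = (\<lambda>j\<in>{0..<m}. ({x \<in> {1..n}. g x + j < m}, {x \<in> {1..n}. g x \<le> m + j}))"

definition Psi :: "nat \<Rightarrow> nat \<Rightarrow> (nat \<Rightarrow> nat set \<times> nat set) \<Rightarrow> nat \<Rightarrow> nat" where
  "Psi n m M = (\<lambda>x\<in>{1..n}. card {j \<in> {0..<m}. x \<notin> fst (M j)} + card {j \<in> {0..<m}. x \<notin> snd (M j)})"

lemma card_lemma1: "card {j \<in> {0..<m}. \<not> (v + j < m)} = m - (m - v)"
proof -
  have "{j \<in> {0..<m}. \<not> (v + j < m)} = {m - v..<m}" by auto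
  then show ?thesis by simp
qed

lemma card_lemma2: "v \<le> 2 * m \<Longrightarrow> card {j \<in> {0..<m}. \<not> (v \<le> m + j)} = v - m"
proof -
  assume "v \<le> 2 * m"
  then have "{j \<in> {0..<m}. \<not> (v \<le> m + j)} = {0..<v - m}" by auto
  then show ?thesis by simp
qed

lemma Psi_Phi: assumes g: "g \<in> GG n m" shows "Psi n m (Phi n m g) = g"
proof
  fix x
  show "Psi n m (Phi n m g) x = g x"
  proof (cases "x \<in> {1..n}")
    case True
    have v: "g x \<le> 2 * m" using g True by (auto simp: GG_def PiE_def Pi_def)
    have "{j \<in> {0..<m}. x \<notin> fst (Phi n m g j)} = {j \<in> {0..<m}. \<not> (g x + j < m)}"
      using True by (auto simp: Phi_def)
    moreover have "{j \<in> {0..<m}. x \<notin> snd (Phi n m g j)} = {j \<in> {0..<m}. \<not> (g x \<le> m + j)}"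
      using True by (auto simp: Phi_def)
    ultimately show ?thesis using True card_lemma1[of m "g x"] card_lemma2[OF v] v
      by (simp add: Psi_def)
  next
    case False
    then show ?thesis using g by (auto simp: Psi_def GG_def PiE_def extensional_def)
  qed
qed

lemma Phi_MC: assumes g: "g \<in> GG n m" shows "Phi n m g \<in> MC n m"
proof -
  obtain x0 where x0: "x0 \<in> {1..n}" "g x0 = 0" using g by (auto simp: GG_def)
  obtain x1 where x1: "x1 \<in> {1..n}" "g x1 = 2 * m" using g by (auto simp: GG_def)
  have "Phi n m g j \<in> Pb n" if "j < m" for j
  proof -
    have ne: "{x \<in> {1..n}. g x \<le> m + j} \<noteq> {1..n}"
    proof
      assume "{x \<in> {1..n}. g x \<le> m + j} = {1..n}"
      then have "x1 \<in> {x \<in> {1..n}. g x \<le> m + j}" using x1 by simp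
      then show False using x1 that by simp
    qed
    show ?thesis unfolding Pb_iff Phi_def using that x0 ne by auto
  qed
  moreover have "monoM m (Phi n m g)"
    unfolding monoM_def interval_le_def Phi_def by auto
  ultimately show ?thesis unfolding MC_def by (auto simp: Phi_def)
qed

lemma MC_props:
  assumes M: "M \<in> MC n m" and ij: "i \<le> j" "j < m"
  shows "fst (M j) \<subseteq> fst (M i)" "snd (M i) \<subseteq> snd (M j)"
  using M ij by (auto simp: MC_def monoM_def interval_le_def)

lemma MC_Pb: "M \<in> MC n m \<Longrightarrow> j < m \<Longrightarrow> M j \<in> Pb n"
  by (auto simp: MC_def)

lemma Phi_Psi: assumes M: "M \<in> MC n m" shows "Phi n m (Psi n m M) = M"
proof
  fix j
  show "Phi n m (Psi n m M) j = M j"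
  proof (cases "j < m")
    case False
    then show ?thesis using M by (auto simp: Phi_def MC_def PiE_def extensional_def)
  next
    case True
    let ?a = "\<lambda>x. card {i \<in> {0..<m}. x \<notin> fst (M i)}"
    let ?b = "\<lambda>x. card {i \<in> {0..<m}. x \<notin> snd (M i)}"
    have PbMj: "M j \<in> Pb n" using MC_Pb[OF M True] .
    have amax: "?a x \<le> m" for x by (rule order_trans[OF card_mono[of "{0..<m}"]]) auto
    have A: "x \<in> fst (M j) \<longleftrightarrow> ?a x + ?b x + j < m" if x: "x \<in> {1..n}" for x
    proof
      assume xa: "x \<in> fst (M j)"
      have "{i \<in> {0..<m}. x \<notin> fst (M i)} \<subseteq> {Suc j..<m}"
        using xa MC_props(1)[OF M _ True] by (force simp: not_less_eq_eq[symmetric])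
      then have "?a x \<le> m - Suc j" using card_mono[of "{Suc j..<m}"] by fastforce
      moreover have "?b x = 0"
      proof -
        have "x \<in> snd (M i)" if "i < m" for i
        proof (cases "j \<le> i")
          case True
          then show ?thesis using xa MC_props(2)[OF M True \<open>i < m\<close>] PbMj by (auto simp: Pb_iff)
        next
          case False
          then have "i \<le> j" by simp
          then show ?thesis using xa MC_props(1)[OF M \<open>i \<le> j\<close> \<open>j < m\<close>] MC_Pb[OF M \<open>i < m\<close>]
            by (auto simp: Pb_iff)
        qed
        then have "{i \<in> {0..<m}. x \<notin> snd (M i)} = {}" by auto
        then show ?thesis by (simp only: card.empty)
      qed
      ultimately show "?a x + ?b x + j < m" using True by linarith
    next
      assume h: "?a x + ?b x + j < m"
      show "x \<in> fst (M j)"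
      proof (rule ccontr)
        assume xa: "x \<notin> fst (M j)"
        have "{j..<m} \<subseteq> {i \<in> {0..<m}. x \<notin> fst (M i)}"
        proof
          fix i assume "i \<in> {j..<m}"
          then show "i \<in> {i \<in> {0..<m}. x \<notin> fst (M i)}" using xa MC_props(1)[OF M, of j i] by auto
        qed
        then have "m - j \<le> ?a x" using card_mono[of "{i \<in> {0..<m}. x \<notin> fst (M i)}" "{j..<m}"] by simp
        then show False using h by simp
      qed
    qed
    have B: "x \<in> snd (M j) \<longleftrightarrow> ?a x + ?b x \<le> m + j" if x: "x \<in> {1..n}" for x
    proof
      assume xb: "x \<in> snd (M j)"
      have "{i \<in> {0..<m}. x \<notin> snd (M i)} \<subseteq> {0..<j}"
        using xb MC_props(2)[OF M] by (force simp: not_less[symmetric])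
      then have "?b x \<le> j" using card_mono[of "{0..<j}"] by fastforce
      then show "?a x + ?b x \<le> m + j" using amax[of x] by simp
    next
      assume h: "?a x + ?b x \<le> m + j"
      show "x \<in> snd (M j)"
      proof (rule ccontr)
        assume xb: "x \<notin> snd (M j)"
        have "{0..j} \<subseteq> {i \<in> {0..<m}. x \<notin> snd (M i)}"
        proof
          fix i assume "i \<in> {0..j}"
          then show "i \<in> {i \<in> {0..<m}. x \<notin> snd (M i)}" using xb MC_props(2)[OF M, of i j] True by auto
        qed
        then have b: "Suc j \<le> ?b x" using card_mono[of "{i \<in> {0..<m}. x \<notin> snd (M i)}" "{0..j}"] by simp
        have "x \<notin> fst (M i)" if "i < m" for i
        proof (cases "j \<le> i")
          case True
          then show ?thesis using xb MC_props(1)[OF M True \<open>i < m\<close>] PbMj by (auto simp: Pb_iff)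
        next
          case False
          then have "i \<le> j" by simp
          then show ?thesis using xb MC_props(2)[OF M \<open>i \<le> j\<close> \<open>j < m\<close>] MC_Pb[OF M \<open>i < m\<close>]
            by (auto simp: Pb_iff)
        qed
        then have "{i \<in> {0..<m}. x \<notin> fst (M i)} = {0..<m}" by auto
        then have "?a x = m" by simp
        then show False using h b by simp
      qed
    qed
    have f: "fst (M j) = {x \<in> {1..n}. Psi n m M x + j < m}"
      using A PbMj by (auto simp: Psi_def Pb_iff)
    have s: "snd (M j) = {x \<in> {1..n}. Psi n m M x \<le> m + j}"
      using B PbMj by (auto simp: Psi_def Pb_iff)
    show ?thesis using True f s by (simp add: Phi_def prod_eq_iff)
  qed
qed

lemma Psi_GG: assumes M: "M \<in> MC n m" and m: "0 < m" shows "Psi n m M \<in> GG n m"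
proof -
  have le: "card {j \<in> {0..<m}. P j} \<le> m" for P by (rule order_trans[OF card_mono[of "{0..<m}"]]) auto
  have "Psi n m M x \<le> 2 * m" if "x \<in> {1..n}" for x
    using that le[of "\<lambda>j. x \<notin> fst (M j)"] le[of "\<lambda>j. x \<notin> snd (M j)"] by (simp add: Psi_def)
  then have pi: "Psi n m M \<in> {1..n} \<rightarrow>\<^sub>E {0..2*m}"
    by (auto simp: PiE_def Pi_def extensional_def Psi_def)
  have last: "M (m - 1) \<in> Pb n" using MC_Pb[OF M] m by simp
  obtain x0 where x0: "x0 \<in> fst (M (m - 1))" using last by (auto simp: Pb_iff)
  have x0n: "x0 \<in> {1..n}" using x0 last by (auto simp: Pb_iff)
  have "x0 \<in> fst (M i)" "x0 \<in> snd (M i)" if "i < m" for i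
  proof -
    have "i \<le> m - 1" "m - 1 < m" using that m by auto
    then show "x0 \<in> fst (M i)" using x0 MC_props(1)[OF M, of i "m - 1"] by auto
    then show "x0 \<in> snd (M i)" using MC_Pb[OF M that] by (auto simp: Pb_iff)
  qed
  then have h0: "Psi n m M x0 = 0" using x0n by (simp add: Psi_def)
  have "snd (M (m - 1)) \<subseteq> {1..n}" "snd (M (m - 1)) \<noteq> {1..n}" using last by (auto simp: Pb_iff)
  then obtain x1 where x1: "x1 \<in> {1..n}" "x1 \<notin> snd (M (m - 1))" by blast
  have "x1 \<notin> snd (M i)" "x1 \<notin> fst (M i)" if "i < m" for i
  proof -
    have "i \<le> m - 1" "m - 1 < m" using that m by auto
    then show "x1 \<notin> snd (M i)" using x1 MC_props(2)[OF M, of i "m - 1"] by auto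
    then show "x1 \<notin> fst (M i)" using MC_Pb[OF M that] by (auto simp: Pb_iff)
  qed
  then have "{j \<in> {0..<m}. x1 \<notin> fst (M j)} = {0..<m}" "{j \<in> {0..<m}. x1 \<notin> snd (M j)} = {0..<m}" by auto
  then have h1: "Psi n m M x1 = 2 * m" using x1 by (simp add: Psi_def)
  show ?thesis using pi h0 h1 x0n x1 by (auto simp: GG_def)
qed

lemma card_MC_GG: assumes "0 < m" shows "card (MC n m) = card (GG n m)"
proof -
  have "bij_betw (Psi n m) (MC n m) (GG n m)"
    by (rule bij_betwI[where g = "Phi n m"]) (auto simp: Psi_GG[OF _ assms] Phi_MC Phi_Psi Psi_Phi)
  then show ?thesis by (rule bij_betw_same_card)
qed


lemma card_GG:
  assumes m: "0 < m"
  shows "int (card (GG n m)) = (2 * int m + 1) ^ n - 2 * (2 * int m) ^ n + (2 * int m - 1) ^ n"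
proof -
  let ?All = "{1..n} \<rightarrow>\<^sub>E {0..2*m}"
  let ?N0 = "{1..n} \<rightarrow>\<^sub>E ({0..2*m} - {0})"
  let ?N2 = "{1..n} \<rightarrow>\<^sub>E ({0..2*m} - {2*m})"
  have GG_eq: "GG n m = ?All - (?N0 \<union> ?N2)"
    unfolding GG_def by (auto simp: PiE_def Pi_def)
  have fin: "finite ?All" "finite ?N0" "finite ?N2" by (auto intro: finite_PiE)
  have sub: "?N0 \<union> ?N2 \<subseteq> ?All" by (auto simp: PiE_def Pi_def)
  have int: "?N0 \<inter> ?N2 = {1..n} \<rightarrow>\<^sub>E ({0..2*m} - {0, 2*m})"
    by (simp add: PiE_Int Diff_Int_distrib2 Int_absorb Diff_insert2[symmetric] Int_Diff)
       (auto simp: PiE_def Pi_def)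
  have c1: "card ?All = (2*m+1) ^ n" by (simp add: card_funcsetE)
  have c2: "card ?N0 = (2*m) ^ n" by (simp add: card_funcsetE)
  have c3: "card ?N2 = (2*m) ^ n" using m by (simp add: card_funcsetE)
  have c4: "card ({1..n} \<rightarrow>\<^sub>E ({0..2*m} - {0, 2*m})) = (2*m - 1) ^ n"
    using m by (simp add: card_funcsetE card_Diff_subset)
  have un: "card (?N0 \<union> ?N2) + card (?N0 \<inter> ?N2) = card ?N0 + card ?N2"
    using card_Un_Int[OF fin(2,3)] by simp
  have "card (GG n m) = card ?All - card (?N0 \<union> ?N2)"
    unfolding GG_eq by (rule card_Diff_subset) (use fin sub in auto)
  moreover have "card (?N0 \<union> ?N2) \<le> card ?All" using card_mono[OF fin(1) sub] .
  ultimately have "int (card (GG n m)) = int (card ?All) - int (card ?N0) - int (card ?N2) + int (card (?N0 \<inter> ?N2))"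
    using un by linarith
  also have "\<dots> = (2 * int m + 1) ^ n - 2 * (2 * int m) ^ n + (2 * int m - 1) ^ n"
    unfolding int c1 c2 c3 c4 using m by (simp add: of_nat_diff algebra_simps)
  finally show ?thesis .
qed

definition KK :: "nat \<Rightarrow> (nat set \<times> nat set) set set" where
  "KK n = {C. C \<subseteq> Pb n \<and> finite C \<and> chainI C}"

lemma Pb_finite: "finite (Pb n)"
proof -
  have "Pb n \<subseteq> Pow {1..n} \<times> Pow {1..n}"
  proof
    fix I assume "I \<in> Pb n"
    then have "fst I \<subseteq> {1..n}" "snd I \<subseteq> {1..n}" by (auto simp: Pb_iff)
    then show "I \<in> Pow {1..n} \<times> Pow {1..n}" by (cases I) auto
  qed
  then show ?thesis by (rule finite_subset) auto
qed

lemma KK_finite: "finite (KK n)"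
  by (rule finite_subset[of _ "Pow (Pb n)"]) (auto simp: KK_def Pb_finite)

lemma MC_union:
  assumes m: "0 < m"
  shows "MC n m = (\<Union>C\<in>KK n - {{}}. MS m C)"
proof
  show "MC n m \<subseteq> (\<Union>C\<in>KK n - {{}}. MS m C)"
  proof
    fix M assume M: "M \<in> MC n m"
    let ?C = "M ` {0..<m}"
    have "?C \<subseteq> Pb n" using M by (auto simp: MC_def)
    moreover have "chainI ?C"
      unfolding chainI_def
    proof (intro ballI)
      fix x y assume "x \<in> ?C" "y \<in> ?C"
      then obtain i j where "i < m" "j < m" "x = M i" "y = M j" by auto
      then show "interval_le x y \<or> interval_le y x" using M
        by (cases "i \<le> j") (auto simp: MC_def monoM_def)
    qed
    moreover have "?C \<noteq> {}" using m by auto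
    ultimately have "?C \<in> KK n - {{}}" by (auto simp: KK_def)
    moreover have "M \<in> MS m ?C" using M by (auto simp: MS_def MC_def PiE_def)
    ultimately show "M \<in> (\<Union>C\<in>KK n - {{}}. MS m C)" by blast
  qed
next
  show "(\<Union>C\<in>KK n - {{}}. MS m C) \<subseteq> MC n m"
    by (auto simp: KK_def MS_def MC_def PiE_def Pi_def)
qed

lemma card_MC:
  assumes m: "0 < m"
  shows "card (MC n m) = (\<Sum>C\<in>KK n - {{}}. (m - 1) choose (card C - 1))"
proof -
  have "card (MC n m) = (\<Sum>C\<in>KK n - {{}}. card (MS m C))"
    unfolding MC_union[OF m]
  proof (rule card_UN_disjoint)
    show "finite (KK n - {{}})" using KK_finite by auto
    show "\<forall>C\<in>KK n - {{}}. finite (MS m C)" by (auto simp: KK_def intro: MS_finite)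
    show "\<forall>C\<in>KK n - {{}}. \<forall>D\<in>KK n - {{}}. C \<noteq> D \<longrightarrow> MS m C \<inter> MS m D = {}"
      by (auto simp: MS_def)
  qed
  also have "\<dots> = (\<Sum>C\<in>KK n - {{}}. (m - 1) choose (card C - 1))"
  proof (rule sum.cong[OF refl])
    fix C assume C: "C \<in> KK n - {{}}"
    then have "C \<noteq> {}" "finite C" by (auto simp: KK_def)
    then have "card C = Suc (card C - 1)" by (simp add: card_gt_0_iff)
    then have "card (MS (Suc (m - 1)) C) = (m - 1) choose (card C - 1)"
      using C by (intro MS_count) (auto simp: KK_def)
    then show "card (MS m C) = (m - 1) choose (card C - 1)" using m by simp
  qed
  finally show ?thesis .
qed



lemma Kb_eq: "Int_boundary n = KK n"
  unfolding Int_boundary_def Int_complex_def order_complex_def KK_def chainI_def Pb_def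
  by auto

lemma Pb_fin: assumes "I \<in> Pb n" shows "finite (snd I)" "finite (fst I)"
proof -
  have s: "snd I \<subseteq> {1..n}" "fst I \<subseteq> snd I" using assms by (auto simp: Pb_iff)
  show "finite (snd I)" using finite_subset[OF s(1)] by simp
  then show "finite (fst I)" using finite_subset[OF s(2)] by simp
qed

lemma rank_inj_aux:
  assumes I: "I \<in> Pb n" and J: "J \<in> Pb n" and le: "interval_le I J"
    and r: "card (snd I) - card (fst I) = card (snd J) - card (fst J)"
  shows "I = J"
proof -
  have fin: "finite (fst I)" "finite (snd I)" "finite (fst J)" "finite (snd J)"
    using Pb_fin[OF I] Pb_fin[OF J] by auto
  have sub: "fst J \<subseteq> fst I" "snd I \<subseteq> snd J" using le by (auto simp: interval_le_def)
  have sub2: "fst I \<subseteq> snd I" "fst J \<subseteq> snd J" using I J by (auto simp: Pb_iff)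
  have c: "card (fst J) \<le> card (fst I)" "card (snd I) \<le> card (snd J)"
    "card (fst I) \<le> card (snd I)" "card (fst J) \<le> card (snd J)"
    using card_mono[OF fin(1) sub(1)] card_mono[OF fin(4) sub(2)] card_mono[OF fin(2) sub2(1)]
      card_mono[OF fin(4) sub2(2)] by auto
  have "card (fst J) = card (fst I)" "card (snd I) = card (snd J)" using c r by linarith+
  then have "fst J = fst I" "snd I = snd J"
    using card_subset_eq[OF fin(1) sub(1)] card_subset_eq[OF fin(4) sub(2)] by auto
  then show ?thesis by (simp add: prod_eq_iff)
qed

lemma KK_card_le: assumes C: "C \<in> KK n" shows "card C \<le> n - 1"
proof -
  let ?r = "\<lambda>I. card (snd I) - card (fst I)"
  have CP: "C \<subseteq> Pb n" "chainI C" using C by (auto simp: KK_def)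
  have "inj_on ?r C"
  proof (rule inj_onI)
    fix I J assume IJ: "I \<in> C" "J \<in> C" "?r I = ?r J"
    have "interval_le I J \<or> interval_le J I" using CP(2) IJ by (auto simp: chainI_def)
    then show "I = J" using rank_inj_aux[of I n J] rank_inj_aux[of J n I] IJ CP(1) by auto
  qed
  moreover have "?r ` C \<subseteq> {0..<n - 1}"
  proof
    fix y assume "y \<in> ?r ` C"
    then obtain I where I: "I \<in> C" "y = ?r I" by auto
    have IP: "I \<in> Pb n" using I CP by auto
    have fin: "finite (fst I)" "finite (snd I)" using Pb_fin[OF IP] by auto
    have "fst I \<noteq> {}" using IP by (auto simp: Pb_iff)
    then have "card (fst I) \<ge> 1" using fin by (simp add: Suc_le_eq card_gt_0_iff)
    moreover have "card (snd I) < n"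
      using psubset_card_mono[of "{1..n}" "snd I"] IP by (auto simp: Pb_iff)
    moreover have "card (fst I) \<le> card (snd I)"
      using IP fin by (intro card_mono) (auto simp: Pb_iff)
    ultimately show "y \<in> {0..<n - 1}" using I by auto
  qed
  ultimately have "card C \<le> card {0..<n - 1}"
    using card_inj_on_le by blast
  then show ?thesis by simp
qed

lemma KK_exists: "\<exists>C\<in>KK n. card C = n - 1"
proof -
  let ?C = "(\<lambda>j. ({1::nat}, {1..j})) ` {1..n - 1}"
  have "?C \<subseteq> Pb n"
  proof
    fix I assume "I \<in> ?C"
    then obtain j where j: "j \<in> {1..n - 1}" "I = ({1}, {1..j})" by auto
    have "n \<notin> {1..j}" using j by auto
    moreover have "n \<in> {1..n}" using j by auto
    ultimately have "{1..j} \<noteq> {1..n}" by blast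
    then show "I \<in> Pb n" using j by (auto simp: Pb_iff)
  qed
  moreover have "chainI ?C"
    unfolding chainI_def by (auto simp: interval_le_def)
  moreover have "card ?C = n - 1"
  proof -
    have "inj_on (\<lambda>j. ({1::nat}, {1..j})) {1..n - 1}"
    proof (rule inj_onI)
      fix i j assume ij: "i \<in> {1..n - 1}" "j \<in> {1..n - 1}" "({1::nat}, {1..i}) = ({1}, {1..j})"
      then have e: "{1..i} = {1..j}" by simp
      have "i \<in> {1..i}" "j \<in> {1..j}" using ij by auto
      then have "i \<in> {1..j}" "j \<in> {1..i}" unfolding e by auto
      then show "i = j" by auto
    qed
    then show ?thesis by (simp add: card_image)
  qed
  ultimately show ?thesis by (auto simp: KK_def)
qed

lemma cdim1_KK: "cdim1 (KK n) = n - 1"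
  unfolding cdim1_def
proof (rule Max_eqI)
  show "finite (card ` KK n)" using KK_finite by simp
  show "\<And>y. y \<in> card ` KK n \<Longrightarrow> y \<le> n - 1" using KK_card_le by auto
  show "n - 1 \<in> card ` KK n" using KK_exists by force
qed


definition yv :: "nat \<Rightarrow> nat \<Rightarrow> int" where
  "yv i m = (if i = 0 then of_bool (m = 0) else if m = 0 then 0 else int ((m - 1) choose (i - 1)))"

definition Y :: "nat \<Rightarrow> int fps" where
  "Y i = Abs_fps (yv i)"

lemma Y_step: "(1 - fps_X) * Y (Suc i) = fps_X * Y i"
proof -
  have "fps_nth (Y (Suc i) - fps_X * Y (Suc i)) j = fps_nth (fps_X * Y i) j" for j
  proof (cases j)
    case 0 then show ?thesis by (simp add: Y_def yv_def)
  next
    case (Suc l)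
    show ?thesis
    proof (cases l)
      case 0 then show ?thesis using Suc by (simp add: Y_def yv_def)
    next
      case (Suc l')
      then show ?thesis using \<open>j = Suc l\<close>
        by (cases i) (simp_all add: Y_def yv_def)
    qed
  qed
  then show ?thesis by (simp add: fps_eq_iff algebra_simps)
qed

lemma Y_0: "Y 0 = 1"
  by (simp add: fps_eq_iff Y_def yv_def)

lemma Y_pow: "(1 - fps_X) ^ i * Y i = fps_X ^ i"
proof (induction i)
  case 0 then show ?case by (simp add: Y_0)
next
  case (Suc i)
  have "(1 - fps_X) ^ Suc i * Y (Suc i) = (1 - fps_X) ^ i * ((1 - fps_X) * Y (Suc i))"
    by (simp only: power_Suc ac_simps)
  also have "\<dots> = (1 - fps_X) ^ i * (fps_X * Y i)" by (simp only: Y_step)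
  also have "\<dots> = fps_X * ((1 - fps_X) ^ i * Y i)" by (simp only: ac_simps)
  finally show ?case using Suc.IH by simp
qed

lemma fps_of_poly_of_nat: "fps_of_poly (of_nat k :: int poly) = of_nat k"
  by (simp add: of_nat_poly fps_of_poly_const fps_of_nat)

lemma fps_of_poly_1mX: "fps_of_poly [:1, -1 :: int:] = 1 - fps_X"
  by (simp add: fps_of_poly_pCons fps_of_poly_const algebra_simps)

lemma E_0: "E n 0 = 1" by (simp add: E_def q_def)

lemma E_pos: "0 < m \<Longrightarrow> E n (2 * int m) = (2 * int m + 1) ^ n - 2 * (2 * int m) ^ n + (2 * int m - 1) ^ n"
  by (simp add: E_def q_def algebra_simps)

lemma sum_K_yv: "(\<Sum>C\<in>KK n. yv (card C) m) = E n (2 * int m)"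
proof (cases m)
  case 0
  have fin: "finite (KK n)" by (rule KK_finite)
  have "(\<Sum>C\<in>KK n. yv (card C) m) = (\<Sum>C\<in>KK n. of_bool (C = {}))"
  proof (rule sum.cong[OF refl])
    fix C assume "C \<in> KK n"
    then have "finite C" by (auto simp: KK_def)
    then show "yv (card C) m = of_bool (C = {})" using 0 by (simp add: yv_def)
  qed
  also have "\<dots> = 1"
  proof -
    have "{} \<in> KK n" by (auto simp: KK_def chainI_def)
    then have "KK n \<inter> {C. C = {}} = {{}}" by auto
    then show ?thesis using fin by simp
  qed
  finally show ?thesis using 0 E_0 by simp
next
  case (Suc l)
  have fin: "finite (KK n)" by (rule KK_finite)
  have "(\<Sum>C\<in>KK n. yv (card C) m) = (\<Sum>C\<in>KK n - {{}}. yv (card C) m)"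
    by (rule sum.mono_neutral_right) (use fin Suc in \<open>auto simp: yv_def\<close>)
  also have "\<dots> = (\<Sum>C\<in>KK n - {{}}. int (l choose (card C - 1)))"
  proof (rule sum.cong[OF refl])
    fix C assume C: "C \<in> KK n - {{}}"
    then have "finite C" "C \<noteq> {}" by (auto simp: KK_def)
    then have "card C \<noteq> 0" by simp
    then show "yv (card C) m = int (l choose (card C - 1))" using Suc by (simp add: yv_def)
  qed
  also have "\<dots> = int (card (MC n m))" using card_MC[of m n] Suc by simp
  also have "\<dots> = int (card (GG n m))" using card_MC_GG[of m n] Suc by simp
  also have "\<dots> = E n (2 * int m)" using card_GG[of m n] E_pos[of m n] Suc by simp
  finally show ?thesis .
qed

lemma h_closed:
  "fps_of_poly (h_poly (KK n)) = (1 - fps_X) ^ (n - 1) * Abs_fps (\<lambda>m. E n (2 * int m))"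
proof -
  let ?K = "KK n"
  let ?d = "n - 1"
  have "fps_of_poly (h_poly ?K) =
     (\<Sum>i\<le>?d. of_nat (fnum ?K i) * fps_X ^ i * (1 - fps_X) ^ (?d - i))"
    unfolding h_poly_def cdim1_KK
    by (simp add: fps_of_poly_sum fps_of_poly_mult fps_of_poly_power fps_of_poly_of_nat fps_of_poly_1mX)
  also have "\<dots> = (\<Sum>i\<le>?d. (1 - fps_X) ^ ?d * (of_nat (fnum ?K i) * Y i))"
  proof (rule sum.cong[OF refl])
    fix i assume "i \<in> {..?d}"
    then have "?d = i + (?d - i)" by simp
    then have "(1 - fps_X :: int fps) ^ ?d = (1 - fps_X) ^ i * (1 - fps_X) ^ (?d - i)"
      by (metis power_add)
    then show "of_nat (fnum ?K i) * fps_X ^ i * (1 - fps_X) ^ (?d - i) =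
        (1 - fps_X) ^ ?d * (of_nat (fnum ?K i) * Y i)"
      by (simp add: Y_pow[of i, symmetric] algebra_simps)
  qed
  also have "\<dots> = (1 - fps_X) ^ ?d * (\<Sum>i\<le>?d. of_nat (fnum ?K i) * Y i)"
    by (simp add: sum_distrib_left)
  also have "(\<Sum>i\<le>?d. of_nat (fnum ?K i) * Y i) = Abs_fps (\<lambda>m. E n (2 * int m))"
  proof -
    have "fps_nth (\<Sum>i\<le>?d. of_nat (fnum ?K i) * Y i) m = E n (2 * int m)" for m
    proof -
      have "fps_nth (\<Sum>i\<le>?d. of_nat (fnum ?K i) * Y i) m = (\<Sum>i\<le>?d. int (fnum ?K i) * yv i m)"
        by (simp add: fps_sum_nth nth_of_nat_mult Y_def)
      also have "\<dots> = (\<Sum>i\<le>?d. (\<Sum>C\<in>{C \<in> ?K. card C = i}. yv (card C) m))"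
        by (rule sum.cong[OF refl]) (simp add: fnum_def)
      also have "\<dots> = (\<Sum>C\<in>?K. yv (card C) m)"
        by (rule sum.group) (use KK_finite KK_card_le in auto)
      also have "\<dots> = E n (2 * int m)" by (rule sum_K_yv)
      finally show ?thesis .
    qed
    then show ?thesis by (simp add: fps_eq_iff)
  qed
  finally show ?thesis .
qed

theorem proposition5p1:
  fixes n :: nat
  assumes "n \<ge> 1"
  shows "h_poly (Int_boundary n) = Bpp n"
proof -
  have "fps_of_poly (h_poly (Int_boundary n)) = fps_of_poly (Bpp n)"
    unfolding Kb_eq h_closed Bpp_closed[OF assms] ..
  then show ?thesis by (simp add: fps_of_poly_eq_iff)
qed


end
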